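(* Let $A\subseteq\mathbb{R}$ be a nonempty homogeneous suborder and let $X\subseteq\mathbb{R}$ be finite. Then $A\cup X$ is order-isomorphic to $A$.
   Context: A suborder $A\subseteq\mathbb{R}$ is homogeneous if $A\cong A\cap I$ (order-isomorphism) for every open interval $I=(a,b)$ with $-\infty\le a<b\le\infty$. *)

theory Defs
  imports Complex_Main "HOL-Library.Extended_Real"
begin

definition order_iso :: "real set \<Rightarrow> real set \<Rightarrow> bool" where
  "order_iso A B \<longleftrightarrow>
     (\<exists>f. bij_betw f A B \<and> (\<forall>x\<in>A. \<forall>y\<in>A. x < y \<longrightarrow> f x < f y))"

definition open_interval :: "ereal \<Rightarrow> ereal \<Rightarrow> real set" where
  "open_interval a b = {x. a < ereal x \<and> ereal x < b}"

definition homogeneous :: "real set \<Rightarrow> bool" where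
  "homogeneous A \<longleftrightarrow>
     (\<forall>a b. a < b \<longrightarrow> order_iso A (A \<inter> open_interval a b))"

end

theory Submission
  imports Defs
begin

lemma iso_sym:
  assumes "order_iso A B" shows "order_iso B A"
proof -
  obtain f where bf: "bij_betw f A B" and m: "\<forall>x\<in>A. \<forall>y\<in>A. x < y \<longrightarrow> f x < f y"
    using assms unfolding order_iso_def by blast
  let ?g = "inv_into A f"
  have "bij_betw ?g B A" using bf by (rule bij_betw_inv_into)
  moreover have "\<forall>x\<in>B. \<forall>y\<in>B. x < y \<longrightarrow> ?g x < ?g y"
  proof (intro ballI impI)
    fix x y assume xy: "x \<in> B" "y \<in> B" "x < y"
    have gx: "?g x \<in> A" "f (?g x) = x" using xy bf
      by (auto simp: bij_betw_def inv_into_into f_inv_into_f)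
    have gy: "?g y \<in> A" "f (?g y) = y" using xy bf
      by (auto simp: bij_betw_def inv_into_into f_inv_into_f)
    show "?g x < ?g y"
    proof (rule ccontr)
      assume "\<not> ?g x < ?g y"
      hence "?g y < ?g x \<or> ?g y = ?g x" by auto
      thus False using m gx gy xy by (metis less_asym order_less_irrefl)
    qed
  qed
  ultimately show ?thesis unfolding order_iso_def by blast
qed

lemma iso_trans:
  assumes "order_iso A B" "order_iso B C" shows "order_iso A C"
proof -
  obtain f where bf: "bij_betw f A B" and m: "\<forall>x\<in>A. \<forall>y\<in>A. x < y \<longrightarrow> f x < f y"
    using assms unfolding order_iso_def by blast
  obtain g where bg: "bij_betw g B C" and mg: "\<forall>x\<in>B. \<forall>y\<in>B. x < y \<longrightarrow> g x < g y"
    using assms unfolding order_iso_def by blast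
  have "bij_betw (g \<circ> f) A C" using bf bg by (rule bij_betw_trans)
  moreover have "\<forall>x\<in>A. \<forall>y\<in>A. x < y \<longrightarrow> (g \<circ> f) x < (g \<circ> f) y"
    using m mg bf by (auto simp: bij_betw_def)
  ultimately show ?thesis unfolding order_iso_def by blast
qed

lemma iso_glue:
  assumes "order_iso B1 C1" "order_iso B2 C2"
    and "\<forall>x\<in>B1. x < p" "\<forall>x\<in>B2. p < x" "\<forall>x\<in>C1. x < q" "\<forall>x\<in>C2. q < x"
  shows "order_iso (B1 \<union> {p} \<union> B2) (C1 \<union> {q} \<union> C2)"
proof -
  obtain f where bf: "bij_betw f B1 C1" and m: "\<forall>x\<in>B1. \<forall>y\<in>B1. x < y \<longrightarrow> f x < f y"
    using assms unfolding order_iso_def by blast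
  obtain g where bg: "bij_betw g B2 C2" and mg: "\<forall>x\<in>B2. \<forall>y\<in>B2. x < y \<longrightarrow> g x < g y"
    using assms unfolding order_iso_def by blast
  define h where "h x = (if x < p then f x else if x = p then q else g x)" for x
  have fB: "f ` B1 = C1" and gB: "g ` B2 = C2" using bf bg by (auto simp: bij_betw_def)
  have mono: "\<forall>x\<in>B1 \<union> {p} \<union> B2. \<forall>y\<in>B1 \<union> {p} \<union> B2. x < y \<longrightarrow> h x < h y"
  proof (intro ballI impI)
    fix x y assume x: "x \<in> B1 \<union> {p} \<union> B2" and y: "y \<in> B1 \<union> {p} \<union> B2" and xy: "x < y"
    have fx: "z \<in> B1 \<Longrightarrow> f z < q" for z using fB assms(5) by auto
    have gx: "z \<in> B2 \<Longrightarrow> q < g z" for z using gB assms(6) by auto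
    show "h x < h y"
      using x y xy m mg fx gx assms(3,4) unfolding h_def
      by (smt (verit) UnE singletonD)
  qed
  have inj: "inj_on h (B1 \<union> {p} \<union> B2)"
    unfolding inj_on_def by (metis mono linorder_neq_iff order_less_irrefl)
  have img: "h ` (B1 \<union> {p} \<union> B2) = C1 \<union> {q} \<union> C2"
  proof -
    have "h ` B1 = f ` B1" using assms(3) by (auto simp: h_def)
    moreover have "h ` B2 = g ` B2" using assms(4) unfolding h_def by (force intro!: image_cong)
    moreover have "h p = q" by (simp add: h_def)
    ultimately show ?thesis using fB gB by (simp add: image_Un)
  qed
  show ?thesis unfolding order_iso_def bij_betw_def using inj img mono by blast
qed

lemma main_ind:
  assumes ne: "A \<noteq> {}" and hom: "homogeneous A" and fin: "finite X"
  shows "\<forall>a b. a < b \<longrightarrow> order_iso ((A \<union> X) \<inter> open_interval a b) A"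
  using fin
proof (induction X rule: finite_induct)
  case empty
  show ?case using hom unfolding homogeneous_def by (auto intro: iso_sym)
next
  case (insert x X)
  show ?case
  proof (intro allI impI)
    fix a b :: ereal assume ab: "a < b"
    show "order_iso ((A \<union> insert x X) \<inter> open_interval a b) A"
    proof (cases "x \<in> open_interval a b \<and> x \<notin> A")
      case False
      hence "(A \<union> insert x X) \<inter> open_interval a b = (A \<union> X) \<inter> open_interval a b" by auto
      thus ?thesis using insert.IH ab by simp
    next
      case True
      hence ax: "a < ereal x" and xb: "ereal x < b" by (auto simp: open_interval_def)
      obtain c where c: "c \<in> A" using ne by blast
      have eq1: "(A \<union> insert x X) \<inter> open_interval a b =
        ((A \<union> X) \<inter> open_interval a (ereal x)) \<union> {x} \<union> ((A \<union> X) \<inter> open_interval (ereal x) b)"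
        proof -
        have t1: "ereal y < b" if "y < x" for y using that xb less_ereal.simps(1)[of y x] less_trans by metis
        have t2: "a < ereal y" if "x < y" for y using that ax less_ereal.simps(1)[of x y] less_trans by metis
        show ?thesis
        proof (rule set_eqI)
          fix y
          show "y \<in> (A \<union> insert x X) \<inter> open_interval a b \<longleftrightarrow>
            y \<in> ((A \<union> X) \<inter> open_interval a (ereal x)) \<union> {x} \<union> ((A \<union> X) \<inter> open_interval (ereal x) b)"
            unfolding open_interval_def using ax xb t1[of y] t2[of y] less_ereal.simps(1)[of y x]
              less_ereal.simps(1)[of x y] by (cases "y < x"; cases "y = x"; simp)
        qed
      qed
      have eq2: "A = (A \<inter> open_interval (-\<infinity>) (ereal c)) \<union> {c} \<union> (A \<inter> open_interval (ereal c) \<infinity>)"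
        using c by (auto simp: open_interval_def)
      have i1: "order_iso ((A \<union> X) \<inter> open_interval a (ereal x)) (A \<inter> open_interval (-\<infinity>) (ereal c))"
      proof (rule iso_trans)
        show "order_iso ((A \<union> X) \<inter> open_interval a (ereal x)) A" using insert.IH ax by blast
        have "(-\<infinity>::ereal) < ereal c" by simp
        thus "order_iso A (A \<inter> open_interval (-\<infinity>) (ereal c))" using hom unfolding homogeneous_def by blast
      qed
      have i2: "order_iso ((A \<union> X) \<inter> open_interval (ereal x) b) (A \<inter> open_interval (ereal c) \<infinity>)"
      proof (rule iso_trans)
        show "order_iso ((A \<union> X) \<inter> open_interval (ereal x) b) A" using insert.IH xb by blast
        have "ereal c < \<infinity>" by simp
        thus "order_iso A (A \<inter> open_interval (ereal c) \<infinity>)" using hom unfolding homogeneous_def by blast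
      qed
      have "order_iso ((A \<union> insert x X) \<inter> open_interval a b) A"
      proof -
        have "order_iso ((A \<union> insert x X) \<inter> open_interval a b)
           ((A \<inter> open_interval (-\<infinity>) (ereal c)) \<union> {c} \<union> (A \<inter> open_interval (ereal c) \<infinity>))"
          unfolding eq1 by (rule iso_glue[OF i1 i2]) (auto simp: open_interval_def)
        thus ?thesis using eq2 by simp
      qed
      thus ?thesis .
    qed
  qed
qed

theorem mainTheorem11:
  fixes A X :: "real set"
  assumes "A \<noteq> {}" and "homogeneous A" and "finite X"
  shows "order_iso (A \<union> X) A"
proof -
  have "order_iso ((A \<union> X) \<inter> open_interval (-\<infinity>) \<infinity>) A"
    using main_ind[OF assms] by simp
  moreover have "open_interval (-\<infinity>) \<infinity> = UNIV" by (auto simp: open_interval_def)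
  ultimately show ?thesis by simp
qed

end
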